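(* Let $\alpha=[0;a_1,a_2,\dots]$ and $\beta=[0;b_1,b_2,\dots]$ be irrational power series in $\widehat K$ (all $a_i,b_i$ nonconstant polynomials in $R$). Assume there is an integer $n\ge0$ such that $a_i=b_i$ for $i=1,\dots,n$ and $a_{n+1}\ne b_{n+1}$. Then $|\alpha-\beta|=q^{-2\left(\sum_{i=1}^n\deg a_i\right)-\deg a_{n+1}-\deg b_{n+1}+\deg(a_{n+1}-b_{n+1})}.$
   Context: $q$ is a positive power of a prime, $R=\mathbb F_q[Y]$, $\widehat K=\mathbb F_q((Y^{-1}))$ with absolute value $|P/Q|=q^{\deg P-\deg Q}$ extended to $\widehat K$. $[a_0;a_1,a_2,\dots]$ denotes the continued fraction $a_0+1/(a_1+1/(a_2+\cdots))$. *)

theory Defs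
  imports "HOL-Library.Cardinality" "HOL-Computational_Algebra.Polynomial" "HOL-Computational_Algebra.Formal_Laurent_Series"
begin

text \<open>We model K-hat = F_q((Y^-1)) as Laurent series 'a fls in the variable X = Y^-1
  (finitely many negative powers of X = finitely many positive powers of Y),
  where 'a is a finite field with q = CARD('a) elements.\<close>

definition poly_to_fls :: "'a::field poly \<Rightarrow> 'a fls" where
  "poly_to_fls p = poly (map_poly fls_const p) fls_X_inv"

text \<open>Absolute value: |f| = q^(deg f), where deg in Y equals minus the X-subdegree; |0| = 0.\<close>
definition fls_abs :: "'a::{finite,field} fls \<Rightarrow> real" where
  "fls_abs f = (if f = 0 then 0 else real CARD('a) powr (- real_of_int (fls_subdegree f)))"

primrec cf_fin :: "nat \<Rightarrow> (nat \<Rightarrow> 'a::field poly) \<Rightarrow> 'a fls" where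
  "cf_fin 0 a = 0"
| "cf_fin (Suc n) a = inverse (poly_to_fls (a 1) + cf_fin n (\<lambda>i. a (Suc i)))"

definition is_cf_expansion :: "'a::field fls \<Rightarrow> (nat \<Rightarrow> 'a poly) \<Rightarrow> bool" where
  "is_cf_expansion \<alpha> a \<longleftrightarrow> (\<forall>i\<ge>1. degree (a i) > 0) \<and> (\<lambda>n. cf_fin n a) \<longlonglongrightarrow> \<alpha>"

definition fls_irrational :: "'a::field fls \<Rightarrow> bool" where
  "fls_irrational \<alpha> \<longleftrightarrow> (\<nexists>P Q. Q \<noteq> 0 \<and> \<alpha> = poly_to_fls P / poly_to_fls Q)"

end

theory Submission
  imports Defs
begin

lemma p2f_nth: "fls_nth (poly_to_fls p) k = (if k \<le> 0 then coeff p (nat (-k)) else 0)"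
proof (induction p arbitrary: k rule: pCons_induct)
  case 0
  then show ?case by (simp add: poly_to_fls_def)
next
  case (pCons c p)
  have e: "poly_to_fls (pCons c p) = fls_const c + fls_X_inv * poly_to_fls p"
    by (simp add: poly_to_fls_def map_poly_pCons)
  show ?case
    unfolding e using pCons.IH[of "k+1"]
    by (auto simp add: fls_X_inv_times_conv_shift coeff_pCons nat_diff_distrib split: nat.splits)
qed

lemma p2f_diff: "poly_to_fls (p - q) = poly_to_fls p - poly_to_fls q"
  by (rule fls_eqI) (simp add: p2f_nth)

lemma p2f_subdeg:
  assumes "p \<noteq> 0"
  shows "poly_to_fls p \<noteq> 0" "fls_subdegree (poly_to_fls p) = - int (degree p)"
proof -
  have nz: "fls_nth (poly_to_fls p) (- int (degree p)) \<noteq> 0"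
    using assms by (simp add: p2f_nth)
  then show "poly_to_fls p \<noteq> 0" by auto
  show "fls_subdegree (poly_to_fls p) = - int (degree p)"
    using nz by (rule fls_subdegree_eqI) (auto simp: p2f_nth intro!: coeff_eq_0)
qed

lemma add_small:
  fixes f g :: "'a::field fls"
  assumes "f \<noteq> 0" "g = 0 \<or> fls_subdegree g > fls_subdegree f"
  shows "f + g \<noteq> 0 \<and> fls_subdegree (f + g) = fls_subdegree f"
proof (cases "g = 0")
  case True then show ?thesis using assms by simp
next
  case False
  then have lt: "fls_subdegree g > fls_subdegree f" using assms by simp
  have "f + g \<noteq> 0"
  proof
    assume "f + g = 0"
    then have "g = - f" by (simp add: eq_neg_iff_add_eq_0 add.commute)
    then show False using lt by simp
  qed
  then show ?thesis using fls_subdegree_add_eq1[OF assms(1) lt] by simp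
qed

lemma cf_small:
  assumes "\<forall>i\<ge>1. degree (a i) > 0"
  shows "cf_fin m a = 0 \<or> fls_subdegree (cf_fin m a) \<ge> 1"
  using assms
proof (induction m arbitrary: a)
  case 0
  then show ?case by simp
next
  case (Suc m)
  have c: "cf_fin m (\<lambda>i. a (Suc i)) = 0 \<or> fls_subdegree (cf_fin m (\<lambda>i. a (Suc i))) \<ge> 1"
    using Suc.IH[of "\<lambda>i. a (Suc i)"] Suc.prems by auto
  have d: "degree (a 1) > 0" using Suc.prems by auto
  then have nz: "a 1 \<noteq> 0" by auto
  note A = p2f_subdeg[OF nz]
  have "poly_to_fls (a 1) + cf_fin m (\<lambda>i. a (Suc i)) \<noteq> 0 \<and>
        fls_subdegree (poly_to_fls (a 1) + cf_fin m (\<lambda>i. a (Suc i))) = - int (degree (a 1))"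
    using add_small[OF A(1), of "cf_fin m (\<lambda>i. a (Suc i))"] c A(2) d by auto
  then show ?case using d by simp
qed


lemma inv_diff:
  fixes U V :: "'a::field fls"
  assumes "U \<noteq> 0" "V \<noteq> 0"
  shows "inverse U - inverse V = (V - U) * inverse U * inverse V"
  using assms by (simp add: field_simps)

lemma cf_U:
  assumes "\<forall>i\<ge>1. degree (a i) > 0"
  shows "poly_to_fls (a 1) + cf_fin m (\<lambda>i. a (Suc i)) \<noteq> 0 \<and>
        fls_subdegree (poly_to_fls (a 1) + cf_fin m (\<lambda>i. a (Suc i))) = - int (degree (a 1))"
proof -
  have c: "cf_fin m (\<lambda>i. a (Suc i)) = 0 \<or> fls_subdegree (cf_fin m (\<lambda>i. a (Suc i))) \<ge> 1"
    using cf_small[of "\<lambda>i. a (Suc i)"] assms by auto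
  have d: "degree (a 1) > 0" using assms by auto
  then have nz: "a 1 \<noteq> 0" by auto
  note A = p2f_subdeg[OF nz]
  show ?thesis
    using add_small[OF A(1), of "cf_fin m (\<lambda>i. a (Suc i))"] c A(2) d by auto
qed

lemma cf_diff:
  assumes "\<forall>i\<ge>1. degree (a i) > 0" "\<forall>i\<ge>1. degree (b i) > 0"
    "\<forall>i\<in>{1..n}. a i = b i" "a (n+1) \<noteq> b (n+1)" "n+1 \<le> m"
  shows "cf_fin m a - cf_fin m b \<noteq> 0 \<and> fls_subdegree (cf_fin m a - cf_fin m b) =
     2 * (\<Sum>i=1..n. int (degree (a i))) + int (degree (a (n+1))) + int (degree (b (n+1)))
       - int (degree (a (n+1) - b (n+1)))"
  using assms
proof (induction n arbitrary: a b m)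
  case 0
  obtain m' where m: "m = Suc m'" using 0 by (cases m) auto
  define U where "U = poly_to_fls (a 1) + cf_fin m' (\<lambda>i. a (Suc i))"
  define V where "V = poly_to_fls (b 1) + cf_fin m' (\<lambda>i. b (Suc i))"
  define c where "c = cf_fin m' (\<lambda>i. a (Suc i))"
  define d where "d = cf_fin m' (\<lambda>i. b (Suc i))"
  have U: "U \<noteq> 0" "fls_subdegree U = - int (degree (a 1))"
    using cf_U[OF 0(1), of m'] unfolding U_def by auto
  have V: "V \<noteq> 0" "fls_subdegree V = - int (degree (b 1))"
    using cf_U[OF 0(2), of m'] unfolding V_def by auto
  have c: "c = 0 \<or> fls_subdegree c \<ge> 1" unfolding c_def
    using cf_small[of "\<lambda>i. a (Suc i)"] 0(1) by auto
  have d: "d = 0 \<or> fls_subdegree d \<ge> 1" unfolding d_def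
    using cf_small[of "\<lambda>i. b (Suc i)"] 0(2) by auto
  have dc: "d - c = 0 \<or> fls_subdegree (d - c) \<ge> 1"
  proof (cases "d - c = 0")
    case False
    then have "fls_subdegree (d - c) \<ge> min (fls_subdegree d) (fls_subdegree c)"
      by (rule fls_subdegree_minus)
    moreover have "c \<noteq> 0 \<or> d \<noteq> 0" using False by auto
    ultimately show ?thesis using c d by auto
  qed simp
  have ne: "b 1 - a 1 \<noteq> 0" using 0(4) by simp
  note BA = p2f_subdeg[OF ne]
  have VU: "V - U = poly_to_fls (b 1 - a 1) + (d - c)"
    unfolding U_def V_def c_def d_def p2f_diff by simp
  have VU': "V - U \<noteq> 0 \<and> fls_subdegree (V - U) = - int (degree (b 1 - a 1))"
    unfolding VU using add_small[OF BA(1), of "d - c"] BA(2) dc by auto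
  have eq: "cf_fin m a - cf_fin m b = (V - U) * inverse U * inverse V"
    unfolding m using inv_diff[OF U(1) V(1)] by (simp add: U_def V_def)
  have deg: "degree (b 1 - a 1) = degree (a 1 - b 1)"
    by (metis degree_minus minus_diff_eq)
  show ?case unfolding eq using VU' U V deg by simp
next
  case (Suc n)
  obtain m' where m: "m = Suc m'" using Suc by (cases m) auto
  have ab1: "a 1 = b 1" using Suc.prems(3) by auto
  define U where "U = poly_to_fls (a 1) + cf_fin m' (\<lambda>i. a (Suc i))"
  define V where "V = poly_to_fls (b 1) + cf_fin m' (\<lambda>i. b (Suc i))"
  have U: "U \<noteq> 0" "fls_subdegree U = - int (degree (a 1))"
    using cf_U[OF Suc.prems(1), of m'] unfolding U_def by auto
  have V: "V \<noteq> 0" "fls_subdegree V = - int (degree (b 1))"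
    using cf_U[OF Suc.prems(2), of m'] unfolding V_def by auto
  have IH: "cf_fin m' (\<lambda>i. a (Suc i)) - cf_fin m' (\<lambda>i. b (Suc i)) \<noteq> 0 \<and>
     fls_subdegree (cf_fin m' (\<lambda>i. a (Suc i)) - cf_fin m' (\<lambda>i. b (Suc i))) =
     2 * (\<Sum>i=1..n. int (degree (a (Suc i)))) + int (degree (a (Suc n+1))) + int (degree (b (Suc n+1)))
       - int (degree (a (Suc n+1) - b (Suc n+1)))"
    using Suc.IH[of "\<lambda>i. a (Suc i)" "\<lambda>i. b (Suc i)" m'] Suc.prems m by auto
  have VU: "V - U = - (cf_fin m' (\<lambda>i. a (Suc i)) - cf_fin m' (\<lambda>i. b (Suc i)))"
    unfolding U_def V_def ab1 by simp
  have eq: "cf_fin m a - cf_fin m b = (V - U) * inverse U * inverse V"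
    unfolding m using inv_diff[OF U(1) V(1)] by (simp add: U_def V_def)
  have sum: "(\<Sum>i=1..Suc n. int (degree (a i))) = int (degree (a 1)) + (\<Sum>i=1..n. int (degree (a (Suc i))))"
    apply (subst sum.atLeast_Suc_atMost, simp)
    apply (simp only: numeral_2_eq_2 One_nat_def sum.shift_bounds_cl_Suc_ivl)
    done
  have VU': "V - U \<noteq> 0 \<and> fls_subdegree (V - U) =
     2 * (\<Sum>i=1..n. int (degree (a (Suc i)))) + int (degree (a (Suc n+1))) + int (degree (b (Suc n+1)))
       - int (degree (a (Suc n+1) - b (Suc n+1)))"
    unfolding VU using IH by (simp only: fls_uminus_subdegree neg_equal_0_iff_equal not_False_eq_True simp_thms)
  have "cf_fin m a - cf_fin m b \<noteq> 0 \<and> fls_subdegree (cf_fin m a - cf_fin m b) =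
     fls_subdegree (V - U) - fls_subdegree U - fls_subdegree V"
    unfolding eq using VU' U V by simp
  then show ?case using VU' U V ab1 sum by simp
qed


lemma dist_small:
  fixes x y :: "'a::group_add fls"
  assumes "dist x y < inverse (2 ^ k)"
  shows "x = y \<or> int k < fls_subdegree (x - y)"
proof (rule ccontr)
  assume h: "\<not> (x = y \<or> int k < fls_subdegree (x - y))"
  then have ne: "x \<noteq> y" and le: "fls_subdegree (x - y) \<le> int k" by auto
  show False
  proof (cases "fls_subdegree (x - y) \<ge> 0")
    case True
    then have "dist x y = inverse (2 ^ nat (fls_subdegree (x - y)))"
      using ne by (simp add: dist_fls_def)
    moreover have "(2::real) ^ nat (fls_subdegree (x - y)) \<le> 2 ^ k"
      using le by (intro power_increasing) auto
    ultimately have "inverse ((2::real) ^ k) \<le> dist x y"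
      by (simp add: le_imp_inverse_le)
    then show False using assms by simp
  next
    case False
    then have "dist x y = 2 ^ nat (- fls_subdegree (x - y))"
      using ne by (simp add: dist_fls_def)
    then have "dist x y \<ge> 1" by simp
    moreover have "inverse ((2::real) ^ k) \<le> 1" by (simp add: inverse_le_1_iff)
    ultimately show False using assms by simp
  qed
qed

theorem lemma2p3:
  fixes \<alpha> \<beta> :: "'a::{finite,field} fls"
    and a b :: "nat \<Rightarrow> 'a poly"
    and n :: nat
  assumes "fls_irrational \<alpha>" and "fls_irrational \<beta>"
    and "is_cf_expansion \<alpha> a" and "is_cf_expansion \<beta> b"
    and "\<forall>i\<in>{1..n}. a i = b i"
    and "a (n+1) \<noteq> b (n+1)"
  shows "fls_abs (\<alpha> - \<beta>) =
    real CARD('a) powr real_of_int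
      (- 2 * (\<Sum>i=1..n. int (degree (a i))) - int (degree (a (n+1)))
       - int (degree (b (n+1))) + int (degree (a (n+1) - b (n+1))))"
proof -
  define D where "D = 2 * (\<Sum>i=1..n. int (degree (a i))) + int (degree (a (n+1))) + int (degree (b (n+1)))
       - int (degree (a (n+1) - b (n+1)))"
  have da: "\<forall>i\<ge>1. degree (a i) > 0" and la: "(\<lambda>m. cf_fin m a) \<longlonglongrightarrow> \<alpha>"
    using assms(3) by (auto simp: is_cf_expansion_def)
  have db: "\<forall>i\<ge>1. degree (b i) > 0" and lb: "(\<lambda>m. cf_fin m b) \<longlonglongrightarrow> \<beta>"
    using assms(4) by (auto simp: is_cf_expansion_def)
  define k where "k = Suc (nat D)"
  have kD: "int k > D" unfolding k_def by simp
  have r: "inverse ((2::real) ^ k) > 0" by simp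
  obtain n1 where n1: "\<And>m. m \<ge> n1 \<Longrightarrow> dist (cf_fin m a) \<alpha> < inverse (2 ^ k)"
    using la r unfolding lim_sequentially by blast
  obtain n2 where n2: "\<And>m. m \<ge> n2 \<Longrightarrow> dist (cf_fin m b) \<beta> < inverse (2 ^ k)"
    using lb r unfolding lim_sequentially by blast
  define m where "m = max (max n1 n2) (n+1)"
  define f where "f = cf_fin m a"
  define g where "g = cf_fin m b"
  have fg: "f - g \<noteq> 0 \<and> fls_subdegree (f - g) = D"
    unfolding f_def g_def D_def using cf_diff[OF da db assms(5,6), of m] by (simp add: m_def)
  have e1: "\<alpha> - f = 0 \<or> fls_subdegree (\<alpha> - f) > D"
    using dist_small[OF n1[of m]] kD fls_subdegree_minus_sym[of \<alpha> f]
    unfolding f_def m_def by auto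
  have e2: "g - \<beta> = 0 \<or> fls_subdegree (g - \<beta>) > D"
    using dist_small[OF n2[of m]] kD unfolding g_def m_def by auto
  have e: "(\<alpha> - f) + (g - \<beta>) = 0 \<or> fls_subdegree ((\<alpha> - f) + (g - \<beta>)) > D"
  proof (cases "(\<alpha> - f) + (g - \<beta>) = 0")
    case False
    then have "fls_subdegree ((\<alpha> - f) + (g - \<beta>)) \<ge> min (fls_subdegree (\<alpha> - f)) (fls_subdegree (g - \<beta>))"
      by (rule fls_plus_subdegree)
    moreover have "\<alpha> - f \<noteq> 0 \<or> g - \<beta> \<noteq> 0" using False by auto
    ultimately show ?thesis using e1 e2 by auto
  qed simp
  have ab: "\<alpha> - \<beta> = (f - g) + ((\<alpha> - f) + (g - \<beta>))" by simp
  have res: "\<alpha> - \<beta> \<noteq> 0 \<and> fls_subdegree (\<alpha> - \<beta>) = D"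
    unfolding ab using add_small[of "f - g" "(\<alpha> - f) + (g - \<beta>)"] fg e by auto
  have "- real_of_int (fls_subdegree (\<alpha> - \<beta>)) = real_of_int
      (- 2 * (\<Sum>i=1..n. int (degree (a i))) - int (degree (a (n+1)))
       - int (degree (b (n+1))) + int (degree (a (n+1) - b (n+1))))"
    using res unfolding D_def by (simp only:)
  then show ?thesis using res unfolding fls_abs_def by simp
qed

end
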